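(* Let $\mathbf{C}$ and $\mathbf{D}$ be categories and let $F : \mathrm{Ob}(\mathbf{D}) \rightleftarrows \mathrm{Ob}(\mathbf{C}) : G$ be a pre-adjunction between $\mathbf{C}$ and $\mathbf{D}$, with family of maps $\Phi_{\mathcal{Y},\mathcal{X}} : \hom_\mathbf{C}(F(\mathcal{Y}), \mathcal{X}) \to \hom_\mathbf{D}(\mathcal{Y}, G(\mathcal{X}))$. If $\mathbf{C}$ has the Ramsey property, then $\mathbf{D}$ has the Ramsey property.
   Context: For a category $\mathbf{C}$, an integer $k\ge 2$ and objects $\mathcal{A},\mathcal{B},\mathcal{C}$, write $\mathcal{C}\longrightarrow(\mathcal{B})^{\mathcal{A}}_k$ if for every partition $\hom_\mathbf{C}(\mathcal{A},\mathcal{C})=\Sigma_1\cup\dots\cup\Sigma_k$ into pairwise disjoint sets there are $i\in\{1,\dots,k\}$ and $w\in\hom_\mathbf{C}(\mathcal{B},\mathcal{C})$ with $w\cdot\hom_\mathbf{C}(\mathcal{A},\mathcal{B})\subseteq\Sigma_i$. A category $\mathbf{C}$ has the Ramsey property if for every integer $k\ge2$ and all objects $\mathcal{A},\mathcal{B}$ with $\hom_\mathbf{C}(\mathcal{A},\mathcal{B})\neq\varnothing$ there is an object $\mathcal{C}$ with $\mathcal{C}\longrightarrow(\mathcal{B})^{\mathcal{A}}_k$. A pre-adjunction between categories $\mathbf{C}$ and $\mathbf{D}$ is a pair of maps (not necessarily functors) $F:\mathrm{Ob}(\mathbf{D})\to\mathrm{Ob}(\mathbf{C})$ and $G:\mathrm{Ob}(\mathbf{C})\to\mathrm{Ob}(\mathbf{D})$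 together with a family of maps (not necessarily natural or bijective) $\Phi_{\mathcal{Y},\mathcal{X}}:\hom_\mathbf{C}(F(\mathcal{Y}),\mathcal{X})\to\hom_\mathbf{D}(\mathcal{Y},G(\mathcal{X}))$, indexed by all pairs $(\mathcal{Y},\mathcal{X})\in\mathrm{Ob}(\mathbf{D})\times\mathrm{Ob}(\mathbf{C})$ with $\hom_\mathbf{C}(F(\mathcal{Y}),\mathcal{X})\ne\varnothing$, satisfying: (PA) for every $\mathcal{C}\in\mathrm{Ob}(\mathbf{C})$, all $\mathcal{D},\mathcal{E}\in\mathrm{Ob}(\mathbf{D})$, every $u\in\hom_\mathbf{C}(F(\mathcal{D}),\mathcal{C})$ and every $f\in\hom_\mathbf{D}(\mathcal{E},\mathcal{D})$ there is $v\in\hom_\mathbf{C}(F(\mathcal{E}),F(\mathcal{D}))$ with $\Phi_{\mathcal{D},\mathcal{C}}(u)\cdot f=\Phi_{\mathcal{E},\mathcal{C}}(u\cdot v)$. *)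

theory Defs
  imports Main
begin

text \<open>A (possibly large-hom) category presented by its class of objects, hom-sets,
composition (comp g f = g \<cdot> f, i.e. first f then g) and identities.\<close>

record ('o, 'm) category =
  Ob :: "'o set"
  Hom :: "'o \<Rightarrow> 'o \<Rightarrow> 'm set"
  comp :: "'m \<Rightarrow> 'm \<Rightarrow> 'm"
  idm :: "'o \<Rightarrow> 'm"

definition is_category :: "('o, 'm) category \<Rightarrow> bool" where
  "is_category C \<longleftrightarrow>
     (\<forall>a\<in>Ob C. \<forall>b\<in>Ob C. \<forall>c\<in>Ob C. \<forall>f\<in>Hom C a b. \<forall>g\<in>Hom C b c.
        comp C g f \<in> Hom C a c) \<and>
     (\<forall>a\<in>Ob C. \<forall>b\<in>Ob C. \<forall>c\<in>Ob C. \<forall>d\<in>Ob C.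
        \<forall>f\<in>Hom C a b. \<forall>g\<in>Hom C b c. \<forall>h\<in>Hom C c d.
        comp C h (comp C g f) = comp C (comp C h g) f) \<and>
     (\<forall>a\<in>Ob C. idm C a \<in> Hom C a a) \<and>
     (\<forall>a\<in>Ob C. \<forall>b\<in>Ob C. \<forall>f\<in>Hom C a b.
        comp C (idm C b) f = f \<and> comp C f (idm C a) = f) \<and>
     (\<forall>a\<in>Ob C. \<forall>b\<in>Ob C. \<forall>c\<in>Ob C. \<forall>d\<in>Ob C.
        Hom C a b \<inter> Hom C c d \<noteq> {} \<longrightarrow> a = c \<and> b = d)"

definition ramsey_arrow ::
  "('o, 'm) category \<Rightarrow> 'o \<Rightarrow> 'o \<Rightarrow> 'o \<Rightarrow> nat \<Rightarrow> bool" where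
  "ramsey_arrow C Z B A k \<longleftrightarrow>
     (\<forall>\<Sigma> :: nat \<Rightarrow> 'm set.
        (\<Union>i\<in>{1..k}. \<Sigma> i) = Hom C A Z \<and>
        (\<forall>i\<in>{1..k}. \<forall>j\<in>{1..k}. i \<noteq> j \<longrightarrow> \<Sigma> i \<inter> \<Sigma> j = {})
        \<longrightarrow> (\<exists>i\<in>{1..k}. \<exists>w\<in>Hom C B Z. (\<lambda>f. comp C w f) ` Hom C A B \<subseteq> \<Sigma> i))"

definition ramsey_property :: "('o, 'm) category \<Rightarrow> bool" where
  "ramsey_property C \<longleftrightarrow>
     (\<forall>k::nat. k \<ge> 2 \<longrightarrow> (\<forall>A\<in>Ob C. \<forall>B\<in>Ob C. Hom C A B \<noteq> {} \<longrightarrow>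
        (\<exists>Z\<in>Ob C. ramsey_arrow C Z B A k)))"

definition pre_adjunction ::
  "('oc, 'mc) category \<Rightarrow> ('od, 'md) category \<Rightarrow> ('od \<Rightarrow> 'oc) \<Rightarrow> ('oc \<Rightarrow> 'od)
     \<Rightarrow> ('od \<Rightarrow> 'oc \<Rightarrow> 'mc \<Rightarrow> 'md) \<Rightarrow> bool" where
  "pre_adjunction C D F G \<Phi> \<longleftrightarrow>
     (\<forall>Y\<in>Ob D. F Y \<in> Ob C) \<and>
     (\<forall>X\<in>Ob C. G X \<in> Ob D) \<and>
     (\<forall>Y\<in>Ob D. \<forall>X\<in>Ob C. Hom C (F Y) X \<noteq> {} \<longrightarrow>
        (\<forall>u\<in>Hom C (F Y) X. \<Phi> Y X u \<in> Hom D Y (G X))) \<and>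
     (\<forall>X\<in>Ob C. \<forall>Y\<in>Ob D. \<forall>E\<in>Ob D. \<forall>u\<in>Hom C (F Y) X. \<forall>f\<in>Hom D E Y.
        \<exists>v\<in>Hom C (F E) (F Y). comp D (\<Phi> Y X u) f = \<Phi> E X (comp C u v))"

end

theory Submission
  imports Defs
begin

theorem theorem3p2:
  fixes C :: "('oc, 'mc) category" and D :: "('od, 'md) category"
    and F :: "'od \<Rightarrow> 'oc" and G :: "'oc \<Rightarrow> 'od" and \<Phi> :: "'od \<Rightarrow> 'oc \<Rightarrow> 'mc \<Rightarrow> 'md"
  assumes "is_category C" and "is_category D"
    and "pre_adjunction C D F G \<Phi>"
    and "ramsey_property C"
  shows "ramsey_property D"
  unfolding ramsey_property_def
proof (intro allI impI ballI)
  fix k :: nat and A B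
  assume k: "2 \<le> k" and A: "A \<in> Ob D" and B: "B \<in> Ob D" and ne: "Hom D A B \<noteq> {}"
  have FA: "F A \<in> Ob C" and FB: "F B \<in> Ob C"
    using assms(3) A B unfolding pre_adjunction_def by auto
  have Gob: "\<And>X. X \<in> Ob C \<Longrightarrow> G X \<in> Ob D"
    using assms(3) unfolding pre_adjunction_def by auto
  have PhiH: "\<And>Y X u. Y \<in> Ob D \<Longrightarrow> X \<in> Ob C \<Longrightarrow> u \<in> Hom C (F Y) X \<Longrightarrow> \<Phi> Y X u \<in> Hom D Y (G X)"
    using assms(3) unfolding pre_adjunction_def by blast
  have PA: "\<And>X Y E u f. X \<in> Ob C \<Longrightarrow> Y \<in> Ob D \<Longrightarrow> E \<in> Ob D \<Longrightarrow> u \<in> Hom C (F Y) X \<Longrightarrow> f \<in> Hom D E Y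
     \<Longrightarrow> \<exists>v\<in>Hom C (F E) (F Y). comp D (\<Phi> Y X u) f = \<Phi> E X (comp C u v)"
    using assms(3) unfolding pre_adjunction_def by blast
  obtain f where f: "f \<in> Hom D A B" using ne by blast
  have "idm C (F B) \<in> Hom C (F B) (F B)" using assms(1) FB unfolding is_category_def by blast
  then obtain v where "v \<in> Hom C (F A) (F B)" using PA[OF FB B A _ f] by blast
  then have "Hom C (F A) (F B) \<noteq> {}" by blast
  then obtain X where X: "X \<in> Ob C" and arr: "ramsey_arrow C X (F B) (F A) k"
    using assms(4) k FA FB unfolding ramsey_property_def by blast
  show "\<exists>Z\<in>Ob D. ramsey_arrow D Z B A k"
  proof (intro bexI[of _ "G X"])
    show "G X \<in> Ob D" using Gob X .
    show "ramsey_arrow D (G X) B A k"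
      unfolding ramsey_arrow_def
    proof (intro allI impI)
      fix \<Sigma> :: "nat \<Rightarrow> 'md set"
      assume P: "(\<Union>i\<in>{1..k}. \<Sigma> i) = Hom D A (G X) \<and>
        (\<forall>i\<in>{1..k}. \<forall>j\<in>{1..k}. i \<noteq> j \<longrightarrow> \<Sigma> i \<inter> \<Sigma> j = {})"
      define \<Sigma>' where "\<Sigma>' i = {u \<in> Hom C (F A) X. \<Phi> A X u \<in> \<Sigma> i}" for i
      have "(\<Union>i\<in>{1..k}. \<Sigma>' i) = Hom C (F A) X"
      proof
        show "(\<Union>i\<in>{1..k}. \<Sigma>' i) \<subseteq> Hom C (F A) X" unfolding \<Sigma>'_def by blast
        show "Hom C (F A) X \<subseteq> (\<Union>i\<in>{1..k}. \<Sigma>' i)"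
        proof
          fix u assume u: "u \<in> Hom C (F A) X"
          then have "\<Phi> A X u \<in> Hom D A (G X)" using PhiH A X by blast
          then obtain i where "i \<in> {1..k}" "\<Phi> A X u \<in> \<Sigma> i" using P by blast
          then show "u \<in> (\<Union>i\<in>{1..k}. \<Sigma>' i)" using u unfolding \<Sigma>'_def by blast
        qed
      qed
      moreover have "\<forall>i\<in>{1..k}. \<forall>j\<in>{1..k}. i \<noteq> j \<longrightarrow> \<Sigma>' i \<inter> \<Sigma>' j = {}"
      proof (intro ballI impI)
        fix i j assume "i \<in> {1..k}" "j \<in> {1..k}" "i \<noteq> j"
        then have "\<Sigma> i \<inter> \<Sigma> j = {}" using P by blast
        then show "\<Sigma>' i \<inter> \<Sigma>' j = {}" unfolding \<Sigma>'_def by auto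
      qed
      ultimately have "\<exists>i\<in>{1..k}. \<exists>w\<in>Hom C (F B) X. (\<lambda>f. comp C w f) ` Hom C (F A) (F B) \<subseteq> \<Sigma>' i"
        using arr unfolding ramsey_arrow_def by (rule_tac allE[of _ \<Sigma>']) simp_all
      then obtain i w where i: "i \<in> {1..k}" and w: "w \<in> Hom C (F B) X"
        and sub: "(\<lambda>g. comp C w g) ` Hom C (F A) (F B) \<subseteq> \<Sigma>' i"
        by blast
      show "\<exists>i\<in>{1..k}. \<exists>w\<in>Hom D B (G X). (\<lambda>f. comp D w f) ` Hom D A B \<subseteq> \<Sigma> i"
      proof (intro bexI[OF _ i] bexI[of _ "\<Phi> B X w"])
        show "\<Phi> B X w \<in> Hom D B (G X)" using PhiH B X w by blast
        show "(\<lambda>f. comp D (\<Phi> B X w) f) ` Hom D A B \<subseteq> \<Sigma> i"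
        proof
          fix y assume "y \<in> (\<lambda>f. comp D (\<Phi> B X w) f) ` Hom D A B"
          then obtain g where g: "g \<in> Hom D A B" and y: "y = comp D (\<Phi> B X w) g" by blast
          obtain v where v: "v \<in> Hom C (F A) (F B)" and e: "comp D (\<Phi> B X w) g = \<Phi> A X (comp C w v)"
            using PA[OF X B A w g] by blast
          have "comp C w v \<in> \<Sigma>' i" using sub v by blast
          then show "y \<in> \<Sigma> i" using y e unfolding \<Sigma>'_def by simp
        qed
      qed
    qed
  qed
qed

end
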